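(* Let $T\ge1$ be an integer, $\tau\in(0,1)$, $\beta\in(0,1)$, and let $R_f>0$ be a risk-free gross rate. Let $R_1,\dots,R_T$ be independent real random variables (gross risky returns). An investor with wealth $W_t>0$ chooses at each $t=0,\dots,T-1$ a risky share $\alpha_t\in[0,1]$, and wealth evolves as $W_{t+1}=W_t\big(\alpha_tR_{t+1}+(1-\alpha_t)R_f\big)$. Define the value recursively by $v^*_\tau(W_T)=W_T$ and, for $t=T-1,\dots,0$, $$v^*_\tau(W_t)=\max_{\alpha_t\in[0,1]}Q_\tau\big[\beta\,v^*_\tau(W_{t+1})\,\big|\,W_t\big].$$ Let $m_k=\max(Q_\tau[R_k],R_f)$. Then for every $t=0,\dots,T-1$, $$v^*_\tau(W_t)=\beta^{T-t}\,W_t\prod_{k=t+1}^{T}m_k,$$ and the optimal allocation is $\alpha^*_t=1$ if $Q_\tau[R_{t+1}]>R_f$, $\alpha^*_t=0$ if $Q_\tau[R_{t+1}]<R_f$, and any $\alpha_t\in[0,1]$ is optimal if $Q_\tau[R_{t+1}]=R_f$.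
   Context: For a real random variable $Z$ with CDF $F_Z$, $Q_\tau[Z]=\inf\{x\in\mathbb{R}: F_Z(x)\ge\tau\}$, and $Q_\tau[\,\cdot\mid W_t]$ denotes the $\tau$-quantile of the conditional law given current wealth $W_t$. *)

theory Defs
  imports "HOL-Probability.Probability"
begin

definition quantile :: "'a measure \<Rightarrow> real \<Rightarrow> ('a \<Rightarrow> real) \<Rightarrow> real" where
  "quantile M \<tau> Z = Inf {x. cdf (distr M borel Z) x \<ge> \<tau>}"

text \<open>Value with n periods remaining (current time T - n), as a function of current wealth w.
  The conditional quantile given W_t = w is the quantile of the law of
  beta * v(w * (a * R_(t+1) + (1 - a) * Rf)), since R_(t+1) is independent of the past.\<close>
primrec vstar_aux ::
  "'a measure \<Rightarrow> (nat \<Rightarrow> 'a \<Rightarrow> real) \<Rightarrow> real \<Rightarrow> real \<Rightarrow> real \<Rightarrow> nat \<Rightarrow> nat \<Rightarrow> real \<Rightarrow> real" where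
  "vstar_aux M R Rf \<beta> \<tau> T 0 w = w"
| "vstar_aux M R Rf \<beta> \<tau> T (Suc n) w =
     (SUP a\<in>{0..1}. quantile M \<tau>
        (\<lambda>\<omega>. \<beta> * vstar_aux M R Rf \<beta> \<tau> T n (w * (a * R (T - n) \<omega> + (1 - a) * Rf))))"

definition vstar ::
  "'a measure \<Rightarrow> (nat \<Rightarrow> 'a \<Rightarrow> real) \<Rightarrow> real \<Rightarrow> real \<Rightarrow> real \<Rightarrow> nat \<Rightarrow> nat \<Rightarrow> real \<Rightarrow> real" where
  "vstar M R Rf \<beta> \<tau> T t w = vstar_aux M R Rf \<beta> \<tau> T (T - t) w"

definition stage_obj ::
  "'a measure \<Rightarrow> (nat \<Rightarrow> 'a \<Rightarrow> real) \<Rightarrow> real \<Rightarrow> real \<Rightarrow> real \<Rightarrow> nat \<Rightarrow> nat \<Rightarrow> real \<Rightarrow> real \<Rightarrow> real" where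
  "stage_obj M R Rf \<beta> \<tau> T t w a =
     quantile M \<tau> (\<lambda>\<omega>. \<beta> * vstar M R Rf \<beta> \<tau> T (Suc t) (w * (a * R (Suc t) \<omega> + (1 - a) * Rf)))"

end

theory Submission
  imports Defs
begin

lemma upper_set_Ici:
  fixes F :: "real \<Rightarrow> real"
  assumes mono: "\<And>x y. x \<le> y \<Longrightarrow> F x \<le> F y"
    and rc: "\<And>x. continuous (at_right x) F"
    and top: "(F \<longlongrightarrow> 1) at_top" and bot: "(F \<longlongrightarrow> 0) at_bot"
    and t0: "0 < \<tau>" and t1: "\<tau> < 1"
  shows "{x. \<tau> \<le> F x} = {Inf {x. \<tau> \<le> F x}..}"
proof -
  define S where "S = {x. \<tau> \<le> F x}"
  have "eventually (\<lambda>x. F x > \<tau>) at_top" using top t1 by (simp add: order_tendstoD(1))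
  then obtain x0 where "x0 \<in> S" unfolding S_def eventually_at_top_linorder
    by (metis less_eq_real_def order_refl mem_Collect_eq)
  hence ne: "S \<noteq> {}" by auto
  have "eventually (\<lambda>x. F x < \<tau>) at_bot" using bot t0 by (simp add: order_tendstoD(2))
  then obtain b where b: "\<And>x. x \<le> b \<Longrightarrow> F x < \<tau>" unfolding eventually_at_bot_linorder by auto
  have bdd: "bdd_below S"
    unfolding bdd_below_def S_def
    by (metis b mem_Collect_eq nle_le not_less)
  define q where "q = Inf S"
  have up: "x \<in> S \<Longrightarrow> x \<le> y \<Longrightarrow> y \<in> S" for x y using mono unfolding S_def by (auto intro: order_trans)
  have ev: "eventually (\<lambda>y. \<tau> \<le> F y) (at_right q)"
    unfolding eventually_at_right_field
  proof -
    show "\<exists>b>q. \<forall>y>q. y < b \<longrightarrow> \<tau> \<le> F y"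
    proof (intro exI[of _ "q+1"] conjI allI impI)
      fix y assume "y > q"
      then obtain s where "s \<in> S" "s < y" using cInf_less_iff[OF ne bdd] q_def by auto
      thus "\<tau> \<le> F y" using up[of s y] S_def by auto
    qed simp
  qed
  have "\<tau> \<le> F q"
    using rc[of q] ev by (intro tendsto_lowerbound[of F]) (auto simp: continuous_within trivial_limit_at_right_real)
  hence "q \<in> S" by (simp add: S_def)
  hence "S = {q..}" using up cInf_lower[OF _ bdd] q_def by auto
  thus ?thesis using S_def q_def by simp
qed

context prob_space
begin

lemma cdf_distr_eq:
  assumes "Z \<in> borel_measurable M"
  shows "cdf (distr M borel Z) x = prob {\<omega>\<in>space M. Z \<omega> \<le> x}"
  unfolding cdf_def using assms
  by (subst measure_distr) (auto intro: arg_cong[where f=prob])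

lemma quantile_char:
  assumes Z: "Z \<in> borel_measurable M" and t: "0 < \<tau>" "\<tau> < 1"
  shows "{x. \<tau> \<le> prob {\<omega>\<in>space M. Z \<omega> \<le> x}} = {quantile M \<tau> Z..}"
proof -
  interpret D: real_distribution "distr M borel Z" using Z by simp
  have "{x. \<tau> \<le> cdf (distr M borel Z) x} = {Inf {x. \<tau> \<le> cdf (distr M borel Z) x}..}"
    by (rule upper_set_Ici[OF D.cdf_nondecreasing D.cdf_is_right_cont D.cdf_lim_at_top_prob
          D.cdf_lim_at_bot t])
  thus ?thesis unfolding quantile_def cdf_distr_eq[OF Z] by simp
qed

lemma quantile_unique:
  assumes Z: "Z \<in> borel_measurable M" and t: "0 < \<tau>" "\<tau> < 1"
    and q: "\<And>x. \<tau> \<le> prob {\<omega>\<in>space M. Z \<omega> \<le> x} \<longleftrightarrow> q \<le> x"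
  shows "quantile M \<tau> Z = q"
proof -
  have "{quantile M \<tau> Z..} = {q..}" using quantile_char[OF Z t] q by (auto simp: set_eq_iff)
  thus ?thesis by simp
qed

lemma quantile_le_iff:
  assumes Z: "Z \<in> borel_measurable M" and t: "0 < \<tau>" "\<tau> < 1"
  shows "\<tau> \<le> prob {\<omega>\<in>space M. Z \<omega> \<le> x} \<longleftrightarrow> quantile M \<tau> Z \<le> x"
  using quantile_char[OF Z t] by (auto simp: set_eq_iff)

lemma quantile_affine:
  assumes Z: "Z \<in> borel_measurable M" and t: "0 < \<tau>" "\<tau> < 1" and c: "c > 0"
  shows "quantile M \<tau> (\<lambda>\<omega>. c * Z \<omega> + d) = c * quantile M \<tau> Z + d"
proof (rule quantile_unique)
  show "(\<lambda>\<omega>. c * Z \<omega> + d) \<in> borel_measurable M" using Z by measurable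
  fix x
  have "{\<omega>\<in>space M. c * Z \<omega> + d \<le> x} = {\<omega>\<in>space M. Z \<omega> \<le> (x - d) / c}"
    using c by (auto simp: field_simps)
  moreover have "quantile M \<tau> Z \<le> (x - d) / c \<longleftrightarrow> c * quantile M \<tau> Z + d \<le> x"
    using c by (auto simp: field_simps)
  ultimately show "\<tau> \<le> prob {\<omega>\<in>space M. c * Z \<omega> + d \<le> x} \<longleftrightarrow> c * quantile M \<tau> Z + d \<le> x"
    using quantile_le_iff[OF Z t] by simp
qed (use t in auto)

lemma quantile_const:
  assumes t: "0 < \<tau>" "\<tau> < 1"
  shows "quantile M \<tau> (\<lambda>\<omega>. d) = d"
proof (rule quantile_unique)
  fix x
  show "\<tau> \<le> prob {\<omega>\<in>space M. d \<le> x} \<longleftrightarrow> d \<le> x"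
    using t by (cases "d \<le> x") (auto simp: prob_space)
qed (use t in auto)

lemma quantile_mono_AE:
  assumes Z: "Z \<in> borel_measurable M" and Z': "Z' \<in> borel_measurable M" and t: "0 < \<tau>" "\<tau> < 1"
    and le: "AE \<omega> in M. Z \<omega> \<le> Z' \<omega>"
  shows "quantile M \<tau> Z \<le> quantile M \<tau> Z'"
proof -
  have P: "prob {\<omega>\<in>space M. Z' \<omega> \<le> x} \<le> prob {\<omega>\<in>space M. Z \<omega> \<le> x}" for x
    by (rule finite_measure_mono_AE) (use le Z in \<open>auto elim!: AE_mp\<close>)
  hence "quantile M \<tau> Z \<le> x" if "quantile M \<tau> Z' \<le> x" for x
    using that quantile_le_iff[OF Z t, of x] quantile_le_iff[OF Z' t, of x] P[of x] by linarith
  thus ?thesis by blast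
qed

lemma quantile_cong_AE:
  assumes Z: "Z \<in> borel_measurable M" and Z': "Z' \<in> borel_measurable M" and t: "0 < \<tau>" "\<tau> < 1"
    and eq: "AE \<omega> in M. Z \<omega> = Z' \<omega>"
  shows "quantile M \<tau> Z = quantile M \<tau> Z'"
  using quantile_mono_AE[OF Z Z' t] quantile_mono_AE[OF Z' Z t] eq
  by (metis (mono_tags, lifting) AE_mp AE_I2 order_refl order.antisym)

end


context prob_space
begin

lemma vstar_mono:
  assumes t: "0 < \<tau>" "\<tau> < 1" and b: "0 < \<beta>" and rf: "0 < Rf"
    and meas: "\<And>k. k \<in> {1..T} \<Longrightarrow> R k \<in> borel_measurable M"
    and pos: "\<And>k. k \<in> {1..T} \<Longrightarrow> (AE \<omega> in M. R k \<omega> > 0)"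
  shows "n \<le> T \<Longrightarrow> mono (vstar_aux M R Rf \<beta> \<tau> T n)"
proof (induction n)
  case 0
  then show ?case by (simp add: mono_def)
next
  case (Suc n)
  define v where "v = vstar_aux M R Rf \<beta> \<tau> T n"
  define k where "k = T - n"
  have k: "k \<in> {1..T}" using Suc.prems k_def by auto
  have vm: "v \<in> borel_measurable borel" using Suc v_def by (simp add: borel_measurable_mono)
  have Rk: "R k \<in> borel_measurable M" using meas k by auto
  define f where "f w a = quantile M \<tau> (\<lambda>\<omega>. \<beta> * v (w * (a * R k \<omega> + (1 - a) * Rf)))" for w a
  have vmono: "x \<le> y \<Longrightarrow> v x \<le> v y" for x y using Suc v_def by (auto simp: mono_def)
  have fm: "(\<lambda>\<omega>. \<beta> * v (g \<omega>)) \<in> borel_measurable M" if "g \<in> borel_measurable M" for g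
    using that vm by (intro borel_measurable_times borel_measurable_const measurable_compose[where f=g and g=v])
  have bound: "f w a \<le> quantile M \<tau> (\<lambda>\<omega>. \<beta> * v (\<bar>w\<bar> * (\<bar>R k \<omega>\<bar> + Rf)))" if a: "a \<in> {0..1}" for w a
    unfolding f_def
  proof (rule quantile_mono_AE[OF fm fm t])
    show "(\<lambda>\<omega>. w * (a * R k \<omega> + (1 - a) * Rf)) \<in> borel_measurable M" using Rk by measurable
    show "(\<lambda>\<omega>. \<bar>w\<bar> * (\<bar>R k \<omega>\<bar> + Rf)) \<in> borel_measurable M" using Rk by measurable
    show "AE \<omega> in M. \<beta> * v (w * (a * R k \<omega> + (1 - a) * Rf)) \<le> \<beta> * v (\<bar>w\<bar> * (\<bar>R k \<omega>\<bar> + Rf))"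
    proof (rule AE_I2)
      fix \<omega>
      have "\<bar>a * R k \<omega> + (1 - a) * Rf\<bar> \<le> \<bar>R k \<omega>\<bar> + Rf"
      proof -
        have "\<bar>a * R k \<omega> + (1 - a) * Rf\<bar> \<le> \<bar>a * R k \<omega>\<bar> + \<bar>(1 - a) * Rf\<bar>" by (rule abs_triangle_ineq)
        also have "\<dots> = a * \<bar>R k \<omega>\<bar> + (1 - a) * Rf" using a rf by (simp add: abs_mult)
        also have "\<dots> \<le> 1 * \<bar>R k \<omega>\<bar> + 1 * Rf" using a rf
          by (intro add_mono mult_right_mono) auto
        finally show ?thesis by simp
      qed
      hence "w * (a * R k \<omega> + (1 - a) * Rf) \<le> \<bar>w\<bar> * (\<bar>R k \<omega>\<bar> + Rf)"
      proof -
        assume h: "\<bar>a * R k \<omega> + (1 - a) * Rf\<bar> \<le> \<bar>R k \<omega>\<bar> + Rf"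
        have "w * (a * R k \<omega> + (1 - a) * Rf) \<le> \<bar>w * (a * R k \<omega> + (1 - a) * Rf)\<bar>" by simp
        also have "\<dots> = \<bar>w\<bar> * \<bar>a * R k \<omega> + (1 - a) * Rf\<bar>" by (simp add: abs_mult)
        also have "\<dots> \<le> \<bar>w\<bar> * (\<bar>R k \<omega>\<bar> + Rf)" using h by (simp add: mult_left_mono)
        finally show ?thesis .
      qed
      thus "\<beta> * v (w * (a * R k \<omega> + (1 - a) * Rf)) \<le> \<beta> * v (\<bar>w\<bar> * (\<bar>R k \<omega>\<bar> + Rf))"
        using vmono b by (simp add: mult_left_mono)
    qed
  qed
  have fmono: "f w1 a \<le> f w2 a" if "w1 \<le> w2" "a \<in> {0..1}" for w1 w2 a
    unfolding f_def
  proof (rule quantile_mono_AE[OF fm fm t])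
    show "(\<lambda>\<omega>. w1 * (a * R k \<omega> + (1 - a) * Rf)) \<in> borel_measurable M" using Rk by measurable
    show "(\<lambda>\<omega>. w2 * (a * R k \<omega> + (1 - a) * Rf)) \<in> borel_measurable M" using Rk by measurable
    show "AE \<omega> in M. \<beta> * v (w1 * (a * R k \<omega> + (1 - a) * Rf)) \<le> \<beta> * v (w2 * (a * R k \<omega> + (1 - a) * Rf))"
      using pos[OF k]
    proof (rule AE_mp, intro AE_I2 impI)
      fix \<omega> assume "R k \<omega> > 0"
      hence "a * R k \<omega> + (1 - a) * Rf \<ge> 0" using that rf by simp
      hence "w1 * (a * R k \<omega> + (1 - a) * Rf) \<le> w2 * (a * R k \<omega> + (1 - a) * Rf)"
        using that by (simp add: mult_right_mono)
      thus "\<beta> * v (w1 * (a * R k \<omega> + (1 - a) * Rf)) \<le> \<beta> * v (w2 * (a * R k \<omega> + (1 - a) * Rf))"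
        using vmono b by (simp add: mult_left_mono)
    qed
  qed
  have eq: "vstar_aux M R Rf \<beta> \<tau> T (Suc n) w = (SUP a\<in>{0..1}. f w a)" for w
    by (simp add: f_def v_def k_def)
  show ?case
  proof (rule monoI)
    fix w1 w2 :: real assume "w1 \<le> w2"
    show "vstar_aux M R Rf \<beta> \<tau> T (Suc n) w1 \<le> vstar_aux M R Rf \<beta> \<tau> T (Suc n) w2"
      unfolding eq
    proof (rule cSUP_mono)
      show "bdd_above (f w2 ` {0..1})" by (rule bdd_aboveI2) (rule bound)
    qed (use fmono \<open>w1 \<le> w2\<close> in force)+
  qed
qed


lemma C_pos:
  assumes b: "0 < \<beta>" and rf: "0 < Rf"
  shows "0 < \<beta> ^ n * (\<Prod>k\<in>A. max (quantile M \<tau> (R k)) Rf)"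
  using b rf by (intro mult_pos_pos zero_less_power prod_pos) auto

lemma vstar_stage:
  assumes t: "0 < \<tau>" "\<tau> < 1" and b: "0 < \<beta>" and rf: "0 < Rf"
    and meas: "\<And>k. k \<in> {1..T} \<Longrightarrow> R k \<in> borel_measurable M"
    and pos: "\<And>k. k \<in> {1..T} \<Longrightarrow> (AE \<omega> in M. R k \<omega> > 0)"
    and n: "n < T" and w: "0 < w" and a: "a \<in> {0..1}"
    and lin: "\<And>x. 0 < x \<Longrightarrow> vstar_aux M R Rf \<beta> \<tau> T n x = C * x"
    and C: "0 < C"
  shows "quantile M \<tau> (\<lambda>\<omega>. \<beta> * vstar_aux M R Rf \<beta> \<tau> T n (w * (a * R (T - n) \<omega> + (1 - a) * Rf)))
     = \<beta> * C * w * (a * quantile M \<tau> (R (T - n)) + (1 - a) * Rf)"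
proof -
  define v where "v = vstar_aux M R Rf \<beta> \<tau> T n"
  define k where "k = T - n"
  have k: "k \<in> {1..T}" using n k_def by auto
  have vm: "v \<in> borel_measurable borel" using vstar_mono[OF t b rf meas pos] n v_def
    by (simp add: borel_measurable_mono)
  have Rk: "R k \<in> borel_measurable M" using meas k by auto
  have "quantile M \<tau> (\<lambda>\<omega>. \<beta> * v (w * (a * R k \<omega> + (1 - a) * Rf)))
      = quantile M \<tau> (\<lambda>\<omega>. \<beta> * C * w * (a * R k \<omega> + (1 - a) * Rf))"
  proof (rule quantile_cong_AE[OF _ _ t])
    show "(\<lambda>\<omega>. \<beta> * v (w * (a * R k \<omega> + (1 - a) * Rf))) \<in> borel_measurable M"
    proof -
      have g: "(\<lambda>\<omega>. w * (a * R k \<omega> + (1 - a) * Rf)) \<in> borel_measurable M" using Rk by measurable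
      show ?thesis by (rule borel_measurable_times[OF borel_measurable_const measurable_compose[OF g vm]])
    qed
    show "(\<lambda>\<omega>. \<beta> * C * w * (a * R k \<omega> + (1 - a) * Rf)) \<in> borel_measurable M"
      using Rk by measurable
    show "AE \<omega> in M. \<beta> * v (w * (a * R k \<omega> + (1 - a) * Rf)) = \<beta> * C * w * (a * R k \<omega> + (1 - a) * Rf)"
      using pos[OF k]
    proof (rule AE_mp, intro AE_I2 impI)
      fix \<omega> assume "R k \<omega> > 0"
      hence "a * R k \<omega> + (1 - a) * Rf > 0" using a rf
        by (cases "a = 0") (auto intro: add_pos_nonneg add_nonneg_pos)
      hence "w * (a * R k \<omega> + (1 - a) * Rf) > 0" using w by simp
      thus "\<beta> * v (w * (a * R k \<omega> + (1 - a) * Rf)) = \<beta> * C * w * (a * R k \<omega> + (1 - a) * Rf)"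
        using lin v_def by simp
    qed
  qed
  also have "\<dots> = \<beta> * C * w * (a * quantile M \<tau> (R k) + (1 - a) * Rf)"
  proof (cases "a = 0")
    case True
    then show ?thesis using quantile_const[OF t] by simp
  next
    case False
    hence a0: "a > 0" using a by auto
    have e: "(\<lambda>\<omega>. \<beta> * C * w * (a * R k \<omega> + (1 - a) * Rf))
        = (\<lambda>\<omega>. (\<beta> * C * w * a) * R k \<omega> + \<beta> * C * w * (1 - a) * Rf)"
      by (simp add: algebra_simps)
    have "quantile M \<tau> (\<lambda>\<omega>. (\<beta> * C * w * a) * R k \<omega> + \<beta> * C * w * (1 - a) * Rf) = (\<beta> * C * w * a) * quantile M \<tau> (R k) + \<beta> * C * w * (1 - a) * Rf"
      by (rule quantile_affine[OF Rk t]) (use a0 b C w in simp)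
    thus ?thesis unfolding e by (simp add: algebra_simps)
  qed
  finally show ?thesis by (simp add: v_def k_def)
qed

lemma sup_lin:
  assumes K: "0 < K"
  shows "(SUP a\<in>{0..1::real}. K * (a * q + (1 - a) * r)) = K * max q r"
  unfolding image_def
proof (rule cSup_eq_maximum)
  show "K * max q r \<in> {y. \<exists>x\<in>{0..1}. y = K * (x * q + (1 - x) * r)}"
    by (cases "q \<le> r") (auto intro: bexI[where x=0] bexI[where x=1] simp: max_def)
  fix y assume "y \<in> {y. \<exists>x\<in>{0..1::real}. y = K * (x * q + (1 - x) * r)}"
  then obtain a where a: "a \<in> {0..1}" and y: "y = K * (a * q + (1 - a) * r)" by auto
  have "a * q + (1 - a) * r \<le> a * max q r + (1 - a) * max q r"
    using a by (intro add_mono mult_left_mono) auto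
  also have "\<dots> = max q r" by (simp add: algebra_simps)
  finally show "y \<le> K * max q r" using y K by (simp add: mult_left_mono)
qed

lemma vstar_lin:
  assumes t: "0 < \<tau>" "\<tau> < 1" and b: "0 < \<beta>" and rf: "0 < Rf"
    and meas: "\<And>k. k \<in> {1..T} \<Longrightarrow> R k \<in> borel_measurable M"
    and pos: "\<And>k. k \<in> {1..T} \<Longrightarrow> (AE \<omega> in M. R k \<omega> > 0)"
  shows "n \<le> T \<Longrightarrow> 0 < x \<Longrightarrow> vstar_aux M R Rf \<beta> \<tau> T n x
     = \<beta> ^ n * (\<Prod>k\<in>{T-n+1..T}. max (quantile M \<tau> (R k)) Rf) * x"
proof (induction n arbitrary: x)
  case 0
  then show ?case by simp
next
  case (Suc n)
  define C where "C = \<beta> ^ n * (\<Prod>k\<in>{T-n+1..T}. max (quantile M \<tau> (R k)) Rf)"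
  have C: "0 < C" unfolding C_def by (rule C_pos[OF b rf])
  have n: "n < T" using Suc by auto
  have st: "quantile M \<tau> (\<lambda>\<omega>. \<beta> * vstar_aux M R Rf \<beta> \<tau> T n (x * (a * R (T - n) \<omega> + (1 - a) * Rf)))
     = (\<beta> * C * x) * (a * quantile M \<tau> (R (T - n)) + (1 - a) * Rf)" if "a \<in> {0..1}" for a
    using vstar_stage[where R=R and T=T, OF t b rf meas pos n \<open>0 < x\<close> that _ C] Suc.IH n C_def by simp
  have "vstar_aux M R Rf \<beta> \<tau> T (Suc n) x
      = (SUP a\<in>{0..1}. (\<beta> * C * x) * (a * quantile M \<tau> (R (T - n)) + (1 - a) * Rf))"
    using st by (simp add: image_def)
  also have "\<dots> = (\<beta> * C * x) * max (quantile M \<tau> (R (T - n))) Rf"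
    by (rule sup_lin) (use b C Suc.prems in simp)
  also have "\<dots> = \<beta> ^ Suc n * (\<Prod>k\<in>{T - Suc n + 1..T}. max (quantile M \<tau> (R k)) Rf) * x"
  proof -
    have "{T - Suc n + 1..T} = insert (T - n) {T-n+1..T}" using n by auto
    hence "(\<Prod>k\<in>{T - Suc n + 1..T}. max (quantile M \<tau> (R k)) Rf)
        = max (quantile M \<tau> (R (T - n))) Rf * (\<Prod>k\<in>{T-n+1..T}. max (quantile M \<tau> (R k)) Rf)"
      by simp
    thus ?thesis by (simp add: C_def algebra_simps)
  qed
  finally show ?case .
qed

end


lemma conv_max_iff:
  fixes a q r :: real
  assumes a: "a \<in> {0..1}"
  shows "(a * q + (1 - a) * r = max q r) \<longleftrightarrow> ((q > r \<longrightarrow> a = 1) \<and> (q < r \<longrightarrow> a = 0))"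
proof -
  have e1: "a * q + (1 - a) * r - q = (1 - a) * (r - q)" by (simp add: algebra_simps)
  have e2: "a * q + (1 - a) * r - r = a * (q - r)" by (simp add: algebra_simps)
  consider "q > r" | "q < r" | "q = r" by linarith
  then show ?thesis
  proof cases
    case 1
    then have "a * q + (1 - a) * r = q \<longleftrightarrow> a = 1" using e1 by auto
    then show ?thesis using 1 by (simp add: max_def)
  next
    case 2
    then have "a * q + (1 - a) * r = r \<longleftrightarrow> a = 0" using e2 by auto
    then show ?thesis using 2 by (simp add: max_def)
  next
    case 3
    then show ?thesis by (simp add: algebra_simps)
  qed
qed

theorem mainTheorem4:
  fixes M :: "'a measure" and R :: "nat \<Rightarrow> 'a \<Rightarrow> real"
    and T :: nat and \<tau> \<beta> Rf :: real
  assumes "prob_space M"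
    and "T \<ge> 1"
    and "0 < \<tau>" "\<tau> < 1"
    and "0 < \<beta>" "\<beta> < 1"
    and "0 < Rf"
    and "\<And>k. k \<in> {1..T} \<Longrightarrow> R k \<in> borel_measurable M"
    and "prob_space.indep_vars M (\<lambda>_. borel) R {1..T}"
    and "\<And>k. k \<in> {1..T} \<Longrightarrow> (AE \<omega> in M. R k \<omega> > 0)"
  shows "\<forall>t<T. \<forall>w>0.
      vstar M R Rf \<beta> \<tau> T t w
        = \<beta> ^ (T - t) * w * (\<Prod>k\<in>{t+1..T}. max (quantile M \<tau> (R k)) Rf)
    \<and> (\<forall>a\<in>{0..1}.
         (stage_obj M R Rf \<beta> \<tau> T t w a = vstar M R Rf \<beta> \<tau> T t w)
         \<longleftrightarrow> ((quantile M \<tau> (R (t+1)) > Rf \<longrightarrow> a = 1)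
              \<and> (quantile M \<tau> (R (t+1)) < Rf \<longrightarrow> a = 0)))"
proof (intro allI impI)
  interpret prob_space M by (rule assms(1))
  note t = assms(3,4) and b = assms(5) and rf = assms(7) and meas = assms(8) and pos = assms(10)
  fix t :: nat and w :: real
  assume tT: "t < T" and w: "0 < w"
  define n where "n = T - Suc t"
  have n: "n < T" and n1: "T - t = Suc n" and n2: "T - n = Suc t" and n3: "T - Suc n + 1 = t + 1"
    using tT n_def by auto
  define C where "C = \<beta> ^ n * (\<Prod>k\<in>{T-n+1..T}. max (quantile M \<tau> (R k)) Rf)"
  have C: "0 < C" unfolding C_def by (rule C_pos[OF b rf])
  have lin: "\<And>x. 0 < x \<Longrightarrow> vstar_aux M R Rf \<beta> \<tau> T n x = C * x"
    using vstar_lin[where R=R and T=T, OF t b rf meas pos] n C_def by auto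
  define Q where "Q = quantile M \<tau> (R (Suc t))"
  have st: "stage_obj M R Rf \<beta> \<tau> T t w a = (\<beta> * C * w) * (a * Q + (1 - a) * Rf)"
    if "a \<in> {0..1}" for a
    using vstar_stage[where R=R and T=T, OF t b rf meas pos n w that lin C]
    unfolding stage_obj_def vstar_def Q_def n2 n_def[symmetric] by simp
  have vs: "vstar M R Rf \<beta> \<tau> T t w = (\<beta> * C * w) * max Q Rf"
  proof -
    have "vstar M R Rf \<beta> \<tau> T t w = (SUP a\<in>{0..1}. stage_obj M R Rf \<beta> \<tau> T t w a)"
      unfolding vstar_def stage_obj_def n1 n_def[symmetric] by (simp add: n2)
    also have "\<dots> = (SUP a\<in>{0..1}. (\<beta> * C * w) * (a * Q + (1 - a) * Rf))"
      using st by (simp add: image_def)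
    also have "\<dots> = (\<beta> * C * w) * max Q Rf"
      by (rule sup_lin) (use b C w in simp)
    finally show ?thesis .
  qed
  have K: "0 < \<beta> * C * w" using b C w by simp
  show "vstar M R Rf \<beta> \<tau> T t w
        = \<beta> ^ (T - t) * w * (\<Prod>k\<in>{t+1..T}. max (quantile M \<tau> (R k)) Rf)
    \<and> (\<forall>a\<in>{0..1}.
         (stage_obj M R Rf \<beta> \<tau> T t w a = vstar M R Rf \<beta> \<tau> T t w)
         \<longleftrightarrow> ((quantile M \<tau> (R (t+1)) > Rf \<longrightarrow> a = 1)
              \<and> (quantile M \<tau> (R (t+1)) < Rf \<longrightarrow> a = 0)))"
  proof (intro conjI ballI)
    show "vstar M R Rf \<beta> \<tau> T t w
        = \<beta> ^ (T - t) * w * (\<Prod>k\<in>{t+1..T}. max (quantile M \<tau> (R k)) Rf)"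
      using vstar_lin[where R=R and T=T and n="Suc n" and x=w, OF t b rf meas pos] n w
      unfolding vstar_def n1 n3 by (simp add: algebra_simps)
    fix a :: real assume a: "a \<in> {0..1}"
    have "(stage_obj M R Rf \<beta> \<tau> T t w a = vstar M R Rf \<beta> \<tau> T t w)
        \<longleftrightarrow> (a * Q + (1 - a) * Rf = max Q Rf)"
      using st[OF a] vs K b C w by simp
    also have "\<dots> \<longleftrightarrow> ((Q > Rf \<longrightarrow> a = 1) \<and> (Q < Rf \<longrightarrow> a = 0))"
      by (rule conv_max_iff[OF a])
    finally show "(stage_obj M R Rf \<beta> \<tau> T t w a = vstar M R Rf \<beta> \<tau> T t w)
         \<longleftrightarrow> ((quantile M \<tau> (R (t+1)) > Rf \<longrightarrow> a = 1)
              \<and> (quantile M \<tau> (R (t+1)) < Rf \<longrightarrow> a = 0))"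
      by (simp add: Q_def)
  qed
qed

end
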